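(* Let $\mathbb{H}$ be a finite-dimensional complex Hilbert space and let $t\mapsto H(t)$ be a continuous family of self-adjoint operators on $\mathbb{H}$, with propagator $\{U(t,s)\}_{t,s\in\mathbb{R}}$ (unitaries with $U(t,t)=I$, $U(t,r)U(r,s)=U(t,s)$ and $\mathrm{i}\frac{d}{dt}U(t,s)=H(t)U(t,s)$). Let $X_0=\sum_{j=1}^n\lambda_jE_j$ be a self-adjoint operator with distinct eigenvalues $\lambda_1,\dots,\lambda_n$ and spectral projections $E_j$, and suppose there is $T>0$ with $U(0,T)E_jU(T,0)=E_j$ for all $1\le j\le n$. Fix $j$, let $d_j=\dim E_j[\mathbb{H}]$, let $\{\psi^{(j)}_k:1\le k\le d_j\}$ be an orthonormal basis of $E_j[\mathbb{H}]$, and set $\psi^{(j)}_k(t)=U(0,t)\psi^{(j)}_k$. Let $C_j(t)=[c^{(j)}_{mk}(t)]_{m,k=1}^{d_j}$ with $c^{(j)}_{mk}(t)=\langle\psi^{(j)}_m,H(t)\psi^{(j)}_k\rangle$, let $\tilde V_j(t)=[\tilde v^{(j)}_{mk}(t)]$ be the solution of $\mathrm{i}\frac{d}{dt}\tilde V_j(t)=C_j(t)\tilde V_j(t)$ with $\tilde V_j(0)=I_{d_j}$, and define $\tilde\psi^{(j)}_k(t)=\sum_{m=1}^{d_j}\tilde v^{(j)}_{mk}(t)\psi^{(j)}_m(t)$. Then for all $t$ and all $1\le m,k\le d_j$, $$\Big\langle \tilde\psi^{(j)}_m(t),\frac{d}{dt}\tilde\psi^{(j)}_k(t)\Big\rangle=0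 .$$
   Context: Inner products are linear in the second argument. $U(0,t)=U(t,0)^{-1}$. The matrices $C_j(t)$ are Hermitian, so $\tilde V_j(t)$ is unitary and $\{\tilde\psi^{(j)}_k(t)\}_k$ is an orthonormal basis of $U(0,t)E_jU(t,0)[\mathbb{H}]$. *)

theory Defs
  imports "HOL-Analysis.Analysis"
begin

text \<open>The finite-dimensional complex Hilbert space is modelled as complex ^ 'n
  (any finite-dimensional complex Hilbert space is isometric to such a space),
  operators as complex matrices complex ^ 'n ^ 'n.\<close>

definition cinner :: "complex ^ 'n \<Rightarrow> complex ^ 'n \<Rightarrow> complex" where
  "cinner x y = (\<Sum>i\<in>UNIV. cnj (x $ i) * y $ i)"

definition adjoint_mat :: "complex ^ 'n ^ 'n \<Rightarrow> complex ^ 'n ^ 'n" where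
  "adjoint_mat A = (\<chi> i j. cnj (A $ j $ i))"

definition self_adjoint_mat :: "complex ^ 'n ^ 'n \<Rightarrow> bool" where
  "self_adjoint_mat A \<longleftrightarrow> adjoint_mat A = A"

definition unitary_mat :: "complex ^ 'n ^ 'n \<Rightarrow> bool" where
  "unitary_mat U \<longleftrightarrow> adjoint_mat U ** U = mat 1 \<and> U ** adjoint_mat U = mat 1"

definition cscale_mat :: "complex \<Rightarrow> complex ^ 'n ^ 'n \<Rightarrow> complex ^ 'n ^ 'n" where
  "cscale_mat c A = (\<chi> i j. c * A $ i $ j)"

definition orth_proj_mat :: "complex ^ 'n ^ 'n \<Rightarrow> bool" where
  "orth_proj_mat P \<longleftrightarrow> P ** P = P \<and> self_adjoint_mat P"

end

theory Submission
  imports Defs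
begin
lemma vec_hvd_iff:
  fixes f :: "real \<Rightarrow> 'a::real_normed_vector ^ 'n"
  shows "(f has_vector_derivative D) (at t) \<longleftrightarrow> (\<forall>i. ((\<lambda>s. f s $ i) has_vector_derivative D $ i) (at t))"
proof
  assume "(f has_vector_derivative D) (at t)"
  then show "\<forall>i. ((\<lambda>s. f s $ i) has_vector_derivative D $ i) (at t)"
    using bounded_linear.has_vector_derivative[OF bounded_linear_vec_nth] by blast
next
  assume A: "\<forall>i. ((\<lambda>s. f s $ i) has_vector_derivative D $ i) (at t)"
  have "((\<lambda>y. ((f y - f t) - (y - t) *\<^sub>R D) /\<^sub>R norm (y - t)) \<longlongrightarrow> 0) (at t)"
  proof -
    have "((\<lambda>y. \<chi> i. ((f y $ i - f t $ i) - (y - t) *\<^sub>R D $ i) /\<^sub>R norm (y - t)) \<longlongrightarrow> (\<chi> i. 0)) (at t)"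
      apply (rule tendsto_vec_lambda)
      using A unfolding has_vector_derivative_def has_derivative_at_within by auto
    moreover have "(\<lambda>y. \<chi> i. ((f y $ i - f t $ i) - (y - t) *\<^sub>R D $ i) /\<^sub>R norm (y - t)) = (\<lambda>y. ((f y - f t) - (y - t) *\<^sub>R D) /\<^sub>R norm (y - t))"
      by (auto simp: vec_eq_iff)
    moreover have "(\<chi> i. 0) = (0:: 'a ^ 'n)" by (simp add: vec_eq_iff)
    ultimately show ?thesis by simp
  qed
  then show "(f has_vector_derivative D) (at t)"
    unfolding has_vector_derivative_def has_derivative_at_within
    by (auto intro: bounded_linear_scaleR_left)
qed

lemma mat_hvd_iff:
  fixes f :: "real \<Rightarrow> 'a::real_normed_vector ^ 'n ^ 'm"
  shows "(f has_vector_derivative D) (at t) \<longleftrightarrow> (\<forall>i j. ((\<lambda>s. f s $ i $ j) has_vector_derivative D $ i $ j) (at t))"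
  by (simp add: vec_hvd_iff[of f] vec_hvd_iff[of "\<lambda>s. f s $ _"])

lemma hvd_mat_vec:
  fixes M :: "real \<Rightarrow> complex ^ 'n ^ 'm"
  assumes "(M has_vector_derivative M') (at t)"
  shows "((\<lambda>s. M s *v x) has_vector_derivative (M' *v x)) (at t)"
proof -
  have "\<forall>i a. ((\<lambda>s. M s $ i $ a) has_vector_derivative M' $ i $ a) (at t)"
    using assms mat_hvd_iff by blast
  then show ?thesis
    apply (subst vec_hvd_iff)
    by (auto simp: matrix_vector_mult_def intro!: has_vector_derivative_sum has_vector_derivative_mult_left)
qed

lemma hvd_smult:
  fixes f :: "real \<Rightarrow> complex ^ 'n"
  assumes "(v has_vector_derivative v') (at t)" "(f has_vector_derivative f') (at t)"
  shows "((\<lambda>s. v s *s f s) has_vector_derivative (v t *s f' + v' *s f t)) (at t)"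
  using assms unfolding vec_hvd_iff[of "\<lambda>s. v s *s f s"] vec_hvd_iff[of f]
  by (auto intro!: has_vector_derivative_mult)

lemma cinner_sum_left: "finite A \<Longrightarrow> cinner (\<Sum>q\<in>A. f q) y = (\<Sum>q\<in>A. cinner (f q) y)"
  unfolding cinner_def by (induction A rule: finite_induct) (auto simp: sum.distrib algebra_simps)
lemma cinner_sum_right: "finite A \<Longrightarrow> cinner y (\<Sum>q\<in>A. f q) = (\<Sum>q\<in>A. cinner y (f q))"
  unfolding cinner_def by (induction A rule: finite_induct) (auto simp: sum.distrib algebra_simps)
lemma cinner_add_right: "cinner y (a + b) = cinner y a + cinner y b"
  unfolding cinner_def by (auto simp: sum.distrib algebra_simps)
lemma cinner_scale_left: "cinner (c *s x) y = cnj c * cinner x y"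
  unfolding cinner_def by (auto simp: sum_distrib_left algebra_simps)
lemma cinner_scale_right: "cinner x (c *s y) = c * cinner x y"
  unfolding cinner_def by (auto simp: sum_distrib_left algebra_simps)

lemma swap3: "(\<Sum>i\<in>A. \<Sum>a\<in>B. \<Sum>b\<in>C. F i a b) = (\<Sum>a\<in>B. \<Sum>b\<in>C. \<Sum>i\<in>A. F i a b)"
  apply (rule trans[OF sum.swap])
  apply (rule sum.cong[OF refl])
  apply (rule sum.swap)
  done

lemma cinner_unitary:
  assumes "adjoint_mat W ** W = mat 1"
  shows "cinner (W *v x) (W *v y) = cinner x y"
proof -
  have "cinner (W *v x) (W *v y) = (\<Sum>i\<in>UNIV. \<Sum>a\<in>UNIV. \<Sum>b\<in>UNIV. cnj (x $ a) * y $ b * (cnj (W $ i $ a) * W $ i $ b))"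
    unfolding cinner_def matrix_vector_mult_def
    by (simp add: sum_product sum_distrib_left sum_distrib_right mult_ac)
  also have "\<dots> = (\<Sum>a\<in>UNIV. \<Sum>b\<in>UNIV. \<Sum>i\<in>UNIV. cnj (x $ a) * y $ b * (cnj (W $ i $ a) * W $ i $ b))"
    by (rule swap3)
  also have "\<dots> = (\<Sum>a\<in>UNIV. \<Sum>b\<in>UNIV. cnj (x $ a) * y $ b * (adjoint_mat W ** W) $ a $ b)"
    unfolding adjoint_mat_def matrix_matrix_mult_def
    by (simp add: sum_distrib_left)
  also have "\<dots> = cinner x y"
    unfolding assms cinner_def mat_def by (simp add: if_distrib cong: if_cong)
  finally show ?thesis .
qed

theorem proposition2p1:
  fixes H :: "real \<Rightarrow> complex ^ 'n ^ 'n"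
    and U :: "real \<Rightarrow> real \<Rightarrow> complex ^ 'n ^ 'n"
    and X0 :: "complex ^ 'n ^ 'n"
    and n :: nat and lam :: "nat \<Rightarrow> real" and E :: "nat \<Rightarrow> complex ^ 'n ^ 'n"
    and T :: real and j :: nat and d :: nat
    and \<psi> :: "nat \<Rightarrow> complex ^ 'n"
    and V :: "real \<Rightarrow> nat \<Rightarrow> nat \<Rightarrow> complex"
  assumes H_cont: "continuous_on UNIV H"
    and H_sa: "\<And>t. self_adjoint_mat (H t)"
    and U_unitary: "\<And>t s. unitary_mat (U t s)"
    and U_id: "\<And>t. U t t = mat 1"
    and U_comp: "\<And>t r s. U t r ** U r s = U t s"
    and U_deriv: "\<And>t s. ((\<lambda>\<tau>. U \<tau> s) has_vector_derivative
                             cscale_mat (- \<i>) (H t ** U t s)) (at t)"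
    and n_pos: "n \<ge> 1"
    and lam_distinct: "inj_on lam {1..n}"
    and E_proj: "\<And>i. i \<in> {1..n} \<Longrightarrow> orth_proj_mat (E i)"
    and E_nonzero: "\<And>i. i \<in> {1..n} \<Longrightarrow> E i \<noteq> 0"
    and E_orth: "\<And>i l. i \<in> {1..n} \<Longrightarrow> l \<in> {1..n} \<Longrightarrow> i \<noteq> l \<Longrightarrow> E i ** E l = 0"
    and E_sum: "(\<Sum>i=1..n. E i) = mat 1"
    and X0_def: "X0 = (\<Sum>i=1..n. cscale_mat (complex_of_real (lam i)) (E i))"
    and T_pos: "T > 0"
    and periodic: "\<And>i. i \<in> {1..n} \<Longrightarrow> U 0 T ** E i ** U T 0 = E i"
    and j_range: "j \<in> {1..n}"
    and d_def: "d = vec.dim (range (\<lambda>x. E j *v x))"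
    and \<psi>_in: "\<And>k. k \<in> {1..d} \<Longrightarrow> \<psi> k \<in> range (\<lambda>x. E j *v x)"
    and \<psi>_orthonormal: "\<And>m k. m \<in> {1..d} \<Longrightarrow> k \<in> {1..d} \<Longrightarrow>
                          cinner (\<psi> m) (\<psi> k) = (if m = k then 1 else 0)"
    and \<psi>_span: "vec.span (\<psi> ` {1..d}) = range (\<lambda>x. E j *v x)"
    and V_ode: "\<And>t m k. m \<in> {1..d} \<Longrightarrow> k \<in> {1..d} \<Longrightarrow>
       ((\<lambda>\<tau>. V \<tau> m k) has_vector_derivative
          (- \<i>) * (\<Sum>l=1..d. cinner (\<psi> m) (H t *v \<psi> l) * V t l k)) (at t)"
    and V_init: "\<And>m k. m \<in> {1..d} \<Longrightarrow> k \<in> {1..d} \<Longrightarrow>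
                   V 0 m k = (if m = k then 1 else 0)"
  shows "\<forall>t m k. m \<in> {1..d} \<longrightarrow> k \<in> {1..d} \<longrightarrow>
     (let \<psi>t = (\<lambda>k s. \<Sum>l=1..d. V s l k *s (U 0 s *v \<psi> l))
      in (\<psi>t k) differentiable (at t) \<and>
         cinner (\<psi>t m t) (vector_derivative (\<psi>t k) (at t)) = 0)"
proof (intro allI impI)
  fix t :: real and m k :: nat
  assume m: "m \<in> {1..d}" and k: "k \<in> {1..d}"
  define W where "W = U 0 t"
  define Hm where "Hm = H t"
  define c where "c = (\<lambda>q l. cinner (\<psi> q) (Hm *v \<psi> l))"
  define V' where "V' = (\<lambda>l k. - \<i> * (\<Sum>p=1..d. c l p * V t p k))"
  have Uadj: "U 0 s = adjoint_mat (U s 0)" for s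
  proof -
    have "U 0 s = U 0 s ** (U s 0 ** adjoint_mat (U s 0))"
      using U_unitary[of s 0] unfolding unitary_mat_def by (simp add: matrix_mul_rid)
    also have "\<dots> = adjoint_mat (U s 0)"
      by (simp add: matrix_mul_assoc U_comp U_id matrix_mul_lid)
    finally show ?thesis .
  qed
  have Wu: "adjoint_mat W ** W = mat 1"
    using U_unitary[of 0 t] unfolding unitary_mat_def W_def by simp
  have Hsa: "cnj (Hm $ a $ b) = Hm $ b $ a" for a b
    using H_sa[of t] unfolding self_adjoint_mat_def adjoint_mat_def Hm_def vec_eq_iff by auto
  have dU: "((\<lambda>s. U s 0 $ a $ b) has_vector_derivative
      (- \<i>) * (\<Sum>e\<in>UNIV. Hm $ a $ e * U t 0 $ e $ b)) (at t)" for a b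
    using U_deriv[of 0 t] unfolding mat_hvd_iff cscale_mat_def Hm_def
    by (simp add: matrix_matrix_mult_def)
  have dW: "((\<lambda>s. U 0 s) has_vector_derivative cscale_mat \<i> (W ** Hm)) (at t)"
    unfolding mat_hvd_iff
  proof (intro allI)
    fix i a
    have "((\<lambda>s. cnj (U s 0 $ a $ i)) has_vector_derivative
       cnj ((- \<i>) * (\<Sum>e\<in>UNIV. Hm $ a $ e * U t 0 $ e $ i))) (at t)"
      by (rule has_vector_derivative_cnj[OF dU])
    moreover have "cnj ((- \<i>) * (\<Sum>e\<in>UNIV. Hm $ a $ e * U t 0 $ e $ i)) = cscale_mat \<i> (W ** Hm) $ i $ a"
      unfolding cscale_mat_def matrix_matrix_mult_def W_def Uadj[of t] adjoint_mat_def
      by (simp add: Hsa mult.commute)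
    ultimately show "((\<lambda>s. U 0 s $ i $ a) has_vector_derivative cscale_mat \<i> (W ** Hm) $ i $ a) (at t)"
      unfolding Uadj adjoint_mat_def by simp
  qed
  define D where "D = (\<lambda>k. \<Sum>l=1..d. V t l k *s (cscale_mat \<i> (W ** Hm) *v \<psi> l) + V' l k *s (U 0 t *v \<psi> l))"
  have hvd: "((\<lambda>s. \<Sum>l=1..d. V s l k *s (U 0 s *v \<psi> l)) has_vector_derivative D k) (at t)"
    if "k \<in> {1..d}" for k
    unfolding D_def
    apply (rule has_vector_derivative_sum)
    apply (rule hvd_smult)
    subgoal using V_ode that unfolding V'_def c_def Hm_def by blast
    by (rule hvd_mat_vec[OF dW])
  have cs: "cscale_mat \<i> (W ** Hm) *v x = \<i> *s (W *v (Hm *v x))" for x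
  proof -
    have "cscale_mat \<i> (W ** Hm) *v x = \<i> *s ((W ** Hm) *v x)"
      by (simp add: cscale_mat_def matrix_vector_mult_def vec_eq_iff sum_distrib_left mult.assoc)
    then show ?thesis by (simp add: matrix_vector_mul_assoc)
  qed
  have inner0: "\<And>q. q \<in> {1..d} \<Longrightarrow> cinner (W *v \<psi> q) (D k) = 0"
  proof -
    fix q assume q: "q \<in> {1..d}"
    have "cinner (W *v \<psi> q) (D k) = (\<Sum>l=1..d. V t l k * \<i> * c q l + V' l k * (if q = l then 1 else 0))"
      unfolding D_def cs W_def[symmetric]
      apply (simp add: cinner_sum_right cinner_add_right cinner_scale_right cinner_unitary[OF Wu] c_def)
      apply (rule sum.cong[OF refl])
      using q \<psi>_orthonormal by auto
    also have "\<dots> = \<i> * (\<Sum>l=1..d. c q l * V t l k) + V' q k"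
    proof -
      have "(\<Sum>l=1..d. V' l k * (if q = l then 1 else 0)) = V' q k"
        using q by (simp add: if_distrib[of "\<lambda>x. V' _ k * x"] sum.delta cong: if_cong)
      then show ?thesis by (simp add: sum.distrib sum_distrib_left mult_ac)
    qed
    also have "\<dots> = 0" unfolding V'_def by simp
    finally show "cinner (W *v \<psi> q) (D k) = 0" .
  qed
  have "cinner (\<Sum>q=1..d. V t q m *s (U 0 t *v \<psi> q)) (D k) = 0"
    by (simp add: cinner_sum_left cinner_scale_left W_def[symmetric] inner0)
  then show "let \<psi>t = (\<lambda>k s. \<Sum>l=1..d. V s l k *s (U 0 s *v \<psi> l))
      in (\<psi>t k) differentiable (at t) \<and>
         cinner (\<psi>t m t) (vector_derivative (\<psi>t k) (at t)) = 0"
    using hvd[OF k] vector_derivative_at[OF hvd[OF k]]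
    by (auto simp: Let_def differentiableI_vector)
qed

end
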